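(* Let $n,m$ be integers with either $m=n-1\geq 0$ or $m=n-2\geq 0$, and let $H(s)=Q_{nm}(s)/P_{nm}(s)$ be the $(n,m)$ Padé approximant of $e^{-s}$. Then $H$ yields a maximally flat delay approximation of order $m+1$: its group delay satisfies $$t_d(\omega)=1+c\,\omega^{2(m+1)}+O(\omega^{2m+4})\quad(\omega\to 0)$$ for some constant $c\neq 0$.
   Context: The $(n,m)$ Padé approximant of $e^{-s}$ is $Q_{nm}(s)/P_{nm}(s)$ with $Q_{nm}(s)=\frac{n!}{(n+m)!}\sum_{k=0}^{m}\binom{m}{k}\frac{(n+k)!}{n!}(-s)^{m-k}$ and $P_{nm}(s)=\frac{m!}{(n+m)!}\sum_{k=0}^{n}\binom{n}{k}\frac{(m+k)!}{m!}s^{n-k}$ (equivalently, the unique rational function with $\deg Q\le m$, $\deg P\le n$, $P(0)=1$, $P(s)e^{-s}-Q(s)=O(s^{n+m+1})$). For a real rational function $H$, its group delay is $t_d(\omega)=-\frac{d}{d\omega}\arg H(j\omega)$, an even function of $\omega$. A delay approximation of unit delay is called maximally flat of order $k$ if, apart from the constant term $1$, the Taylor expansion of $t_d(\omega)$ about $\omega=0$ begins with the term in $\omega^{2k}$. *)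

theory Defs
  imports "HOL-Analysis.Analysis" "HOL-Library.Landau_Symbols"
begin

definition padeQ :: "nat \<Rightarrow> nat \<Rightarrow> complex \<Rightarrow> complex" where
  "padeQ n m s = (fact n / fact (n + m)) *
     (\<Sum>k = 0..m. of_nat (m choose k) * (fact (n + k) / fact n) * (- s) ^ (m - k))"

definition padeP :: "nat \<Rightarrow> nat \<Rightarrow> complex \<Rightarrow> complex" where
  "padeP n m s = (fact m / fact (n + m)) *
     (\<Sum>k = 0..n. of_nat (n choose k) * (fact (m + k) / fact m) * s ^ (n - k))"

definition padeH :: "nat \<Rightarrow> nat \<Rightarrow> complex \<Rightarrow> complex" where
  "padeH n m s = padeQ n m s / padeP n m s"

definition group_delay :: "(complex \<Rightarrow> complex) \<Rightarrow> real \<Rightarrow> real" where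
  "group_delay H w = - deriv (\<lambda>x. Arg (H (\<i> * complex_of_real x))) w"

end

theory Submission
  imports Defs
begin


definition pa :: "nat \<Rightarrow> nat \<Rightarrow> nat \<Rightarrow> complex" where
  "pa n m j = complex_of_real (real (n choose j) * fact (n+m-j) / fact (n+m))"
definition qb :: "nat \<Rightarrow> nat \<Rightarrow> nat \<Rightarrow> complex" where
  "qb n m j = complex_of_real ((-1)^j * real (m choose j) * fact (n+m-j) / fact (n+m))"
definition pP :: "nat \<Rightarrow> nat \<Rightarrow> complex poly" where
  "pP n m = (\<Sum>j\<le>n. monom (pa n m j) j)"
definition pQ :: "nat \<Rightarrow> nat \<Rightarrow> complex poly" where
  "pQ n m = (\<Sum>j\<le>m. monom (qb n m j) j)"

lemma pa_zero: "n < j \<Longrightarrow> pa n m j = 0" by (simp add: pa_def)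
lemma qb_zero: "m < j \<Longrightarrow> qb n m j = 0" by (simp add: qb_def)

lemma coeff_pP: "coeff (pP n m) i = pa n m i"
  by (cases "i \<le> n") (auto simp: pP_def coeff_sum coeff_monom pa_zero)
lemma coeff_pQ: "coeff (pQ n m) i = qb n m i"
  by (cases "i \<le> m") (auto simp: pQ_def coeff_sum coeff_monom qb_zero)

lemma poly_pP: "poly (pP n m) s = padeP n m s"
proof -
  have "padeP n m s = (\<Sum>k = 0..n. fact m / fact (n + m) * (of_nat (n choose k) * (fact (m + k) / fact m) * s ^ (n - k)))"
    by (simp add: padeP_def sum_distrib_left)
  also have "\<dots> = (\<Sum>j = 0..n. fact m / fact (n + m) * (of_nat (n choose (n-j)) * (fact (m + (n-j)) / fact m) * s ^ (n - (n-j))))"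
    by (subst sum.atLeastAtMost_rev) simp
  also have "\<dots> = (\<Sum>j = 0..n. pa n m j * s ^ j)"
  proof (rule sum.cong)
    fix j assume j: "j \<in> {0..n}"
    hence e: "n - (n-j) = j" "m + (n - j) = n + m - j" "n choose (n-j) = n choose j"
      by (auto simp: binomial_symmetric[symmetric])
    show "fact m / fact (n + m) * (of_nat (n choose (n-j)) * (fact (m + (n-j)) / fact m) * s ^ (n - (n-j))) = pa n m j * s ^ j"
      unfolding e by (simp add: pa_def field_simps)
  qed simp
  finally show ?thesis by (simp add: pP_def poly_sum poly_monom atLeast0AtMost)
qed

lemma poly_pQ: "poly (pQ n m) s = padeQ n m s"
proof -
  have "padeQ n m s = (\<Sum>k = 0..m. fact n / fact (n + m) * (of_nat (m choose k) * (fact (n + k) / fact n) * (-s) ^ (m - k)))"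
    by (simp add: padeQ_def sum_distrib_left)
  also have "\<dots> = (\<Sum>j = 0..m. fact n / fact (n + m) * (of_nat (m choose (m-j)) * (fact (n + (m-j)) / fact n) * (-s) ^ (m - (m-j))))"
    by (subst sum.atLeastAtMost_rev) simp
  also have "\<dots> = (\<Sum>j = 0..m. qb n m j * s ^ j)"
  proof (rule sum.cong)
    fix j assume j: "j \<in> {0..m}"
    hence e: "m - (m-j) = j" "n + (m - j) = n + m - j" "m choose (m-j) = m choose j"
      by (auto simp: binomial_symmetric[symmetric])
    show "fact n / fact (n + m) * (of_nat (m choose (m-j)) * (fact (n + (m-j)) / fact n) * (-s) ^ (m - (m-j))) = qb n m j * s ^ j"
      unfolding e power_minus[of s j] by (simp add: qb_def field_simps)
  qed simp
  finally show ?thesis by (simp add: pQ_def poly_sum poly_monom atLeast0AtMost)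
qed



lemma ode_gen:
  fixes p :: "complex poly" and N k :: nat
  assumes h: "\<And>j. of_nat (Suc j) * (of_nat j - of_nat N) * coeff p (Suc j) = (of_nat j - of_nat k) * coeff p j"
  shows "pCons 0 (pderiv (pderiv p)) = smult (of_nat N) (pderiv p) + pCons 0 (pderiv p) - smult (of_nat k) p"
proof (rule poly_eqI)
  fix j
  show "coeff (pCons 0 (pderiv (pderiv p))) j = coeff (smult (of_nat N) (pderiv p) + pCons 0 (pderiv p) - smult (of_nat k) p) j"
  proof (cases j)
    case 0
    then show ?thesis using h[of 0] by (simp add: coeff_pderiv algebra_simps)
  next
    case (Suc i)
    then show ?thesis using h[of "Suc i"] by (simp add: coeff_pderiv algebra_simps)
  qed
qed

lemma ode_genQ:
  fixes p :: "complex poly" and N k :: nat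
  assumes h: "\<And>j. of_nat (Suc j) * (of_nat j - of_nat N) * coeff p (Suc j) = (of_nat k - of_nat j) * coeff p j"
  shows "pCons 0 (pderiv (pderiv p)) = smult (of_nat N) (pderiv p) - pCons 0 (pderiv p) + smult (of_nat k) p"
proof (rule poly_eqI)
  fix j
  show "coeff (pCons 0 (pderiv (pderiv p))) j = coeff (smult (of_nat N) (pderiv p) - pCons 0 (pderiv p) + smult (of_nat k) p) j"
  proof (cases j)
    case 0
    have e: "complex_of_nat k * coeff p 0 = - (of_nat N * coeff p (Suc 0))" using h[of 0] by simp
    show ?thesis using 0 by (simp add: coeff_pderiv e)
  next
    case (Suc i)
    then show ?thesis using h[of "Suc i"] by (simp add: coeff_pderiv algebra_simps)
  qed
qed

lemma binom_step: "j < n \<Longrightarrow> Suc j * (n choose Suc j) = (n - j) * (n choose j)"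
  using times_binomial_minus1_eq[of "Suc j" n] binomial_absorb_comp[of n j] by simp

lemma realP:
  fixes n m j :: nat
  shows "real (Suc j) * (real j - real (n+m)) * (real (n choose Suc j) * fact (n+m - Suc j) / fact (n+m))
       = (real j - real n) * (real (n choose j) * fact (n+m-j) / fact (n+m))"
proof (cases "j < n")
  case True
  have b: "real (Suc j) * real (n choose Suc j) = real (n - j) * real (n choose j)"
    using binom_step[OF True] by (metis of_nat_mult)
  obtain k where k: "n+m-j = Suc k" using True by (metis Suc_diff_Suc add.commute trans_less_add2)
  hence k2: "n+m - Suc j = k" by simp
  have r: "real (n - j) = real n - real j" "real (Suc k) = real n + real m - real j" using True k by auto
  have "real (Suc j) * (real j - real (n+m)) * (real (n choose Suc j) * fact k)
        = (real j - real (n+m)) * fact k * (real (Suc j) * real (n choose Suc j))" by (simp add: algebra_simps)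
  also have "\<dots> = (real j - real (n+m)) * fact k * (real (n - j) * real (n choose j))" by (simp only: b)
  also have "\<dots> = (real j - real n) * (real (n choose j) * (real (Suc k) * fact k))" by (simp only: r) (simp add: algebra_simps)
  finally show ?thesis unfolding k k2 fact_Suc by (simp add: divide_simps)
next
  case False
  then show ?thesis by (cases "j = n") (auto simp: binomial_eq_0)
qed



lemma realQ:
  fixes n m j :: nat
  shows "real (Suc j) * (real j - real (n+m)) * ((-1)^Suc j * real (m choose Suc j) * fact (n+m - Suc j) / fact (n+m))
       = (real m - real j) * ((-1)^j * real (m choose j) * fact (n+m-j) / fact (n+m))"
proof (cases "j < m")
  case True
  have b: "real (Suc j) * real (m choose Suc j) = real (m - j) * real (m choose j)"
    using binom_step[OF True] by (metis of_nat_mult)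
  obtain k where k: "n+m-j = Suc k" using True by (metis Suc_diff_Suc add.commute trans_less_add1 add.commute)
  hence k2: "n+m - Suc j = k" by simp
  have r: "real (m - j) = real m - real j" "real (Suc k) = real n + real m - real j" using True k by auto
  have "real (Suc j) * (real j - real (n+m)) * ((-1)^Suc j * real (m choose Suc j) * fact k)
        = (real j - real (n+m)) * (-1)^Suc j * fact k * (real (Suc j) * real (m choose Suc j))" by (simp add: algebra_simps)
  also have "\<dots> = (real j - real (n+m)) * (-1)^Suc j * fact k * (real (m - j) * real (m choose j))" by (simp only: b)
  also have "\<dots> = (real m - real j) * ((-1)^j * real (m choose j) * (real (Suc k) * fact k))" by (simp only: r) (simp add: algebra_simps)
  finally show ?thesis unfolding k k2 fact_Suc by (simp add: divide_simps)
next
  case False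
  then show ?thesis by (cases "j = m") (auto simp: binomial_eq_0)
qed

lemma odeP: "pCons 0 (pderiv (pderiv (pP n m))) = smult (of_nat (n+m)) (pderiv (pP n m)) + pCons 0 (pderiv (pP n m)) - smult (of_nat n) (pP n m)"
proof (rule ode_gen)
  fix j
  have "complex_of_real (real (Suc j) * (real j - real (n+m)) * (real (n choose Suc j) * fact (n+m - Suc j) / fact (n+m)))
       = complex_of_real ((real j - real n) * (real (n choose j) * fact (n+m-j) / fact (n+m)))"
    using realP by metis
  then show "of_nat (Suc j) * (of_nat j - of_nat (n+m)) * coeff (pP n m) (Suc j) = (of_nat j - of_nat n) * coeff (pP n m) j"
    by (simp add: coeff_pP pa_def)
qed

lemma odeQ: "pCons 0 (pderiv (pderiv (pQ n m))) = smult (of_nat (n+m)) (pderiv (pQ n m)) - pCons 0 (pderiv (pQ n m)) + smult (of_nat m) (pQ n m)"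
proof (rule ode_genQ)
  fix j
  have "complex_of_real (real (Suc j) * (real j - real (n+m)) * ((-1)^Suc j * real (m choose Suc j) * fact (n+m - Suc j) / fact (n+m)))
       = complex_of_real ((real m - real j) * ((-1)^j * real (m choose j) * fact (n+m-j) / fact (n+m)))"
    using realQ by metis
  then show "of_nat (Suc j) * (of_nat j - of_nat (n+m)) * coeff (pQ n m) (Suc j) = (of_nat m - of_nat j) * coeff (pQ n m) j"
    by (simp add: coeff_pQ qb_def)
qed

definition pW :: "nat \<Rightarrow> nat \<Rightarrow> complex poly" where
  "pW n m = pP n m * pderiv (pQ n m) - pQ n m * pderiv (pP n m) + pP n m * pQ n m"

lemma pCons0: "pCons 0 p = [:0,1:] * (p :: complex poly)" by simp

lemma smult_c: "smult a p = [:a:] * (p :: complex poly)" by simp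

lemma ring_id:
  fixes X P Q P1 Q1 P2 Q2 c cn cm :: "'a::comm_ring_1"
  assumes "X*P2 = c*P1 + X*P1 - cn*P" "X*Q2 = c*Q1 - X*Q1 + cm*Q" "c = cn + cm"
  shows "X*(P*Q2 + Q1*P1 - (Q*P2 + P1*Q1) + (P*Q1 + Q*P1)) = c*(P*Q1 - Q*P1 + P*Q)"
proof -
  have "X*(P*Q2 + Q1*P1 - (Q*P2 + P1*Q1) + (P*Q1 + Q*P1)) = P*(X*Q2) - Q*(X*P2) + X*(P*Q1 + Q*P1)"
    by (simp add: algebra_simps)
  also have "\<dots> = P*(c*Q1 - X*Q1 + cm*Q) - Q*(c*P1 + X*P1 - cn*P) + X*(P*Q1 + Q*P1)" by (simp only: assms(1,2))
  also have "\<dots> = c*(P*Q1 - Q*P1) + (cn + cm)*(P*Q)" by (simp add: algebra_simps)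
  also have "\<dots> = c*(P*Q1 - Q*P1 + P*Q)" by (simp only: assms(3)[symmetric]) (simp add: algebra_simps)
  finally show ?thesis .
qed

lemma W_ode: "pCons 0 (pderiv (pW n m)) = smult (of_nat (n+m)) (pW n m)"
proof -
  have eP: "[:0,1:] * pderiv (pderiv (pP n m)) = [:of_nat (n+m):] * (pderiv (pP n m)) + [:0,1:] * pderiv (pP n m) - [:of_nat n:] * (pP n m)"
    using odeP[of n m] unfolding pCons0[symmetric] smult_c[symmetric] .
  have eQ: "[:0,1:] * pderiv (pderiv (pQ n m)) = [:of_nat (n+m):] * (pderiv (pQ n m)) - [:0,1:] * pderiv (pQ n m) + [:of_nat m:] * (pQ n m)"
    using odeQ[of n m] unfolding pCons0[symmetric] smult_c[symmetric] .
  have c: "[:of_nat (n+m)::complex:] = [:of_nat n:] + [:of_nat m:]" by simp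
  have d: "pderiv (pW n m) = pP n m * pderiv (pderiv (pQ n m)) + pderiv (pQ n m) * pderiv (pP n m)
     - (pQ n m * pderiv (pderiv (pP n m)) + pderiv (pP n m) * pderiv (pQ n m))
     + (pP n m * pderiv (pQ n m) + pQ n m * pderiv (pP n m))"
    unfolding pW_def pderiv_add pderiv_diff pderiv_mult ..
  have "[:0,1:] * pderiv (pW n m) = [:of_nat (n+m):] * pW n m"
    unfolding d unfolding pW_def by (rule ring_id[OF eP eQ c])
  thus ?thesis unfolding pCons0[symmetric] smult_c[symmetric] .
qed

lemma W_monom: "pW n m = monom (coeff (pW n m) (n+m)) (n+m)"
proof (rule poly_eqI)
  fix j
  have e1: "coeff (pCons 0 (pderiv (pW n m))) j = of_nat j * coeff (pW n m) j"
    by (cases j) (simp_all add: coeff_pderiv)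
  have e2: "coeff (pCons 0 (pderiv (pW n m))) j = of_nat (n+m) * coeff (pW n m) j"
    unfolding W_ode by (rule coeff_smult)
  from e1 e2 have "of_nat j * coeff (pW n m) j = of_nat (n+m) * coeff (pW n m) j" by (rule trans[OF sym])
  hence "j \<noteq> n+m \<Longrightarrow> coeff (pW n m) j = 0"
  proof -
    assume e: "of_nat j * coeff (pW n m) j = of_nat (n+m) * coeff (pW n m) j" and j: "j \<noteq> n+m"
    have "(of_nat j :: complex) \<noteq> of_nat (n+m)" using j of_nat_eq_iff by blast
    thus ?thesis using e by (metis mult_cancel_right)
  qed
  then show "coeff (pW n m) j = coeff (monom (coeff (pW n m) (n + m)) (n + m)) j"
    by (auto simp: coeff_monom)
qed

lemma coeff_W_top: "coeff (pW n m) (n+m) = pa n m n * qb n m m"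
proof -
  have 1: "coeff (pP n m * pderiv (pQ n m)) (n+m) = 0"
    unfolding coeff_mult
  proof (rule sum.neutral, rule ballI)
    fix i assume "i \<in> {..n+m}"
    show "coeff (pP n m) i * coeff (pderiv (pQ n m)) (n + m - i) = 0"
    proof (cases "i \<le> n")
      case True
      hence "qb n m (Suc (n+m-i)) = 0" by (intro qb_zero) linarith
      thus ?thesis by (simp add: coeff_pderiv coeff_pQ)
    qed (simp add: coeff_pP pa_zero)
  qed
  have 2: "coeff (pQ n m * pderiv (pP n m)) (n+m) = 0"
    unfolding coeff_mult
  proof (rule sum.neutral, rule ballI)
    fix i assume "i \<in> {..n+m}"
    show "coeff (pQ n m) i * coeff (pderiv (pP n m)) (n + m - i) = 0"
    proof (cases "i \<le> m")
      case True
      hence "pa n m (Suc (n+m-i)) = 0" by (intro pa_zero) linarith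
      thus ?thesis by (simp add: coeff_pderiv coeff_pP)
    qed (simp add: coeff_pQ qb_zero)
  qed
  have 3: "coeff (pP n m * pQ n m) (n+m) = (\<Sum>i\<le>n+m. if i = n then pa n m n * qb n m m else 0)"
    unfolding coeff_mult
  proof (rule sum.cong[OF refl])
    fix i assume i: "i \<in> {..n+m}"
    show "coeff (pP n m) i * coeff (pQ n m) (n + m - i) = (if i = n then pa n m n * qb n m m else 0)"
    proof (cases "i = n")
      case False
      show ?thesis
      proof (cases "i < n")
        case True
        hence "qb n m (n+m-i) = 0" by (intro qb_zero) linarith
        thus ?thesis using False by (simp add: coeff_pQ)
      next
        case F2: False
        hence "pa n m i = 0" using False by (intro pa_zero) linarith
        thus ?thesis using False by (simp add: coeff_pP)
      qed
    qed (simp add: coeff_pP coeff_pQ)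
  qed
  show ?thesis unfolding pW_def coeff_add coeff_diff 1 2 3 by simp
qed



lemma deriv_arg:
  fixes P Q :: "complex poly" and x :: real
  assumes P0: "poly P (\<i> * of_real x) \<noteq> 0" and Q0: "poly Q (\<i> * of_real x) \<noteq> 0"
    and nn: "poly Q (\<i> * of_real x) / poly P (\<i> * of_real x) \<notin> \<real>\<^sub>\<le>\<^sub>0"
  shows "((\<lambda>t. Arg (poly Q (\<i> * of_real t) / poly P (\<i> * of_real t))) has_real_derivative
          (Re (poly (P * pderiv Q - Q * pderiv P + P * Q) (\<i> * of_real x) / (poly P (\<i> * of_real x) * poly Q (\<i> * of_real x))) - 1)) (at x)"
proof -
  define z where "z = \<i> * complex_of_real x"
  define H where "H = (\<lambda>w. poly Q (\<i> * w) / poly P (\<i> * w))"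
  have dQ: "((\<lambda>w. poly Q (\<i> * w)) has_field_derivative poly (pderiv Q) z * \<i>) (at (of_real x))"
    unfolding z_def by (rule DERIV_chain2[OF poly_DERIV DERIV_cmult_Id])
  have dP: "((\<lambda>w. poly P (\<i> * w)) has_field_derivative poly (pderiv P) z * \<i>) (at (of_real x))"
    unfolding z_def by (rule DERIV_chain2[OF poly_DERIV DERIV_cmult_Id])
  have dH: "(H has_field_derivative ((poly (pderiv Q) z * \<i>) * poly P z - poly Q z * (poly (pderiv P) z * \<i>)) / (poly P z * poly P z)) (at (of_real x))"
    unfolding H_def using DERIV_divide[OF dQ dP] P0 unfolding z_def by simp
  have Hz: "H (of_real x) = poly Q z / poly P z" by (simp add: H_def z_def)
  have dL: "((\<lambda>w. Ln (H w)) has_field_derivative inverse (H (of_real x)) * (((poly (pderiv Q) z * \<i>) * poly P z - poly Q z * (poly (pderiv P) z * \<i>)) / (poly P z * poly P z))) (at (of_real x))"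
    by (rule DERIV_chain2[OF has_field_derivative_Ln dH]) (use nn in \<open>simp add: Hz z_def\<close>)
  define D where "D = inverse (H (of_real x)) * (((poly (pderiv Q) z * \<i>) * poly P z - poly Q z * (poly (pderiv P) z * \<i>)) / (poly P z * poly P z))"
  have De: "D = \<i> * (poly (P * pderiv Q - Q * pderiv P + P * Q) z / (poly P z * poly Q z) - 1)"
    using P0 Q0 unfolding D_def Hz z_def[symmetric] by (simp add: field_simps)
  have dI: "((\<lambda>t. Im (Ln (H (of_real t)))) has_real_derivative Im D) (at x)"
    by (rule has_field_derivative_Im[OF has_vector_derivative_real_field]) (use dL in \<open>simp add: D_def\<close>)
  define S where "S = {t::real. poly P (\<i> * of_real t) \<noteq> 0 \<and> poly Q (\<i> * of_real t) \<noteq> 0}"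
  have oS: "open S" unfolding S_def
    by (intro open_Collect_conj open_Collect_neq continuous_intros)
  have xS: "x \<in> S" using P0 Q0 by (simp add: S_def)
  have eq: "Im (Ln (H (of_real t))) = Arg (poly Q (\<i> * of_real t) / poly P (\<i> * of_real t))" if "t \<in> S" for t
    using that by (simp add: S_def H_def Arg_eq_Im_Ln)
  have "Im D = Re (poly (P * pderiv Q - Q * pderiv P + P * Q) z / (poly P z * poly Q z)) - 1"
    unfolding De by simp
  with has_field_derivative_transform_within_open[OF dI oS xS eq] show ?thesis
    by (simp add: z_def)
qed

lemma near0:
  fixes P Q :: "complex poly"
  assumes "poly P 0 = 1" "poly Q 0 = 1"
  shows "eventually (\<lambda>x::real. poly P (\<i> * of_real x) \<noteq> 0 \<and> poly Q (\<i> * of_real x) \<noteq> 0 \<and>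
      poly Q (\<i> * of_real x) / poly P (\<i> * of_real x) \<notin> \<real>\<^sub>\<le>\<^sub>0) (at 0)"
proof -
  have tP: "((\<lambda>x::real. poly P (\<i> * of_real x)) \<longlongrightarrow> 1) (at 0)"
    using assms by (intro tendsto_eq_intros) auto
  have tQ: "((\<lambda>x::real. poly Q (\<i> * of_real x)) \<longlongrightarrow> 1) (at 0)"
    using assms by (intro tendsto_eq_intros) auto
  have tH: "((\<lambda>x::real. poly Q (\<i> * of_real x) / poly P (\<i> * of_real x)) \<longlongrightarrow> 1) (at 0)"
    using tendsto_divide[OF tQ tP] by simp
  have e1: "eventually (\<lambda>x. poly P (\<i> * of_real x) \<noteq> 0) (at (0::real))"
    by (rule tendsto_imp_eventually_ne[OF tP]) simp
  have e2: "eventually (\<lambda>x. poly Q (\<i> * of_real x) \<noteq> 0) (at (0::real))"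
    by (rule tendsto_imp_eventually_ne[OF tQ]) simp
  have e3: "eventually (\<lambda>x. dist (poly Q (\<i> * of_real x) / poly P (\<i> * of_real x)) 1 < 1) (at (0::real))"
    using tH by (rule tendstoD) simp
  have nn: "w \<notin> \<real>\<^sub>\<le>\<^sub>0" if "dist w 1 < 1" for w :: complex
  proof -
    have "\<bar>Re (w - 1)\<bar> < 1" using that abs_Re_le_cmod[of "w-1"] by (simp add: dist_norm)
    thus ?thesis by (auto simp: complex_nonpos_Reals_iff)
  qed
  from e1 e2 e3 show ?thesis by eventually_elim (use nn in auto)
qed



lemma pCons0_ex: "coeff p 0 = 0 \<Longrightarrow> \<exists>q. p = pCons 0 q"
  by (cases p) auto

lemma expand:
  fixes G :: "complex poly"
  assumes G0: "coeff G 0 = 1" and G1: "Im (coeff G 1) = 0" and G2: "Im (coeff G 2) = 0"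
  shows "\<exists>M. eventually (\<lambda>x::real. \<bar>Re (1 / poly G (\<i> * of_real x)) - 1\<bar> \<le> M * x^2 \<and>
           \<bar>Im (1 / poly G (\<i> * of_real x)) + Re (coeff G 1) * x\<bar> \<le> M * \<bar>x\<bar>^3) (at 0)"
proof -
  define a where "a = Re (coeff G 1)"
  define b where "b = Re (coeff G 1) * Re (coeff G 1) - Re (coeff G 2)"
  have ga: "coeff G 1 = of_real a" using G1 by (simp add: a_def complex_eq_iff)
  have gb: "coeff G 2 = of_real (a*a - b)" using G2 by (simp add: a_def b_def complex_eq_iff)
  define T :: "complex poly" where "T = [:1, - of_real a, of_real b:]"
  define R where "R = 1 - T * G"
  have ga': "coeff G (Suc 0) = of_real a" using ga by simp
  have gb': "coeff G (Suc (Suc 0)) = of_real (a*a-b)" using gb by (simp add: numeral_2_eq_2)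
  have R0: "coeff R 0 = 0" by (simp add: R_def T_def coeff_mult G0)
  have R1: "coeff R 1 = 0" by (simp add: R_def T_def coeff_mult G0 ga ga' numeral_2_eq_2)
  have R2: "coeff R 2 = 0"
    by (simp add: R_def T_def coeff_mult G0 ga ga' gb gb' numeral_2_eq_2 algebra_simps)
  obtain q1 where q1: "R = pCons 0 q1" using pCons0_ex[OF R0] by blast
  have "coeff q1 0 = 0" using R1 q1 by simp
  then obtain q2 where q2: "q1 = pCons 0 q2" using pCons0_ex by blast
  have "coeff q2 0 = 0" using R2 q1 q2 by (simp add: numeral_2_eq_2)
  then obtain S where S: "q2 = pCons 0 S" using pCons0_ex by blast
  have polyR: "poly R z = z^3 * poly S z" for z
    using q1 q2 S by (simp add: power3_eq_cube)
  define E where "E = (\<lambda>x::real. poly S (\<i> * of_real x) / poly G (\<i> * of_real x))"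
  have pG0: "poly G 0 = 1" using G0 by (simp add: poly_0_coeff_0)
  have tG: "((\<lambda>x::real. poly G (\<i> * of_real x)) \<longlongrightarrow> 1) (at 0)"
    using pG0 by (intro tendsto_eq_intros) auto
  have tE: "(E \<longlongrightarrow> poly S 0) (at 0)"
    unfolding E_def using pG0 by (intro tendsto_eq_intros) auto
  have e1: "eventually (\<lambda>x. poly G (\<i> * of_real x) \<noteq> 0) (at (0::real))"
    by (rule tendsto_imp_eventually_ne[OF tG]) simp
  have e2: "eventually (\<lambda>x. dist (E x) (poly S 0) < 1) (at (0::real))"
    using tE by (rule tendstoD) simp
  have e3: "eventually (\<lambda>x::real. \<bar>x\<bar> < 1) (at 0)"
  proof -
    have "eventually (\<lambda>x::real. dist x 0 < 1) (at 0)"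
      by (rule tendstoD[OF tendsto_ident_at]) simp
    thus ?thesis by simp
  qed
  define M0 where "M0 = norm (poly S 0) + 1"
  define M where "M = \<bar>b\<bar> + M0"
  have key: "\<bar>Re (1 / poly G (\<i> * of_real x)) - 1\<bar> \<le> M * x^2 \<and>
           \<bar>Im (1 / poly G (\<i> * of_real x)) + a * x\<bar> \<le> M * \<bar>x\<bar>^3"
    if nz: "poly G (\<i> * of_real x) \<noteq> 0" and dE: "dist (E x) (poly S 0) < 1" and x1: "\<bar>x\<bar> < 1" for x
  proof -
    define z where "z = \<i> * complex_of_real x"
    define g where "g = poly G z"
    have gz: "g \<noteq> 0" using nz by (simp add: g_def z_def)
    have "poly R z = 1 - poly T z * g" by (simp add: R_def g_def)
    hence "1 / g = poly T z + poly R z / g" using gz by (simp add: field_simps)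
    also have "\<dots> = poly T z + z^3 * E x" by (simp add: polyR E_def z_def g_def)
    finally have inv: "1 / g = poly T z + z^3 * E x" .
    have Tz: "poly T z = complex_of_real (1 - b * x^2) - \<i> * complex_of_real (a * x)"
      by (simp add: T_def z_def algebra_simps power2_eq_square)
    have nE: "norm (E x) \<le> M0"
      using dE norm_triangle_ineq2[of "E x" "poly S 0"] by (simp add: dist_norm M0_def)
    have nz3: "norm (z^3 * E x) \<le> \<bar>x\<bar>^3 * M0"
      by (simp add: z_def norm_mult norm_power mult_left_mono nE)
    have x32: "\<bar>x\<bar>^3 \<le> x^2"
    proof -
      have "\<bar>x\<bar>^3 = \<bar>x\<bar> * x^2" by (simp add: power3_eq_cube power2_eq_square)
      also have "\<dots> \<le> 1 * x^2" using x1 by (intro mult_right_mono) auto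
      finally show ?thesis by simp
    qed
    have M0pos: "M0 \<ge> 0" by (simp add: M0_def)
    have r: "Re (1/g) - 1 = - b * x^2 + Re (z^3 * E x)" unfolding inv Tz by simp
    have i: "Im (1/g) + a * x = Im (z^3 * E x)" unfolding inv Tz by simp
    have "\<bar>Re (z^3 * E x)\<bar> \<le> \<bar>x\<bar>^3 * M0" using abs_Re_le_cmod nz3 order_trans by blast
    also have "\<dots> \<le> x^2 * M0" using x32 M0pos by (rule mult_right_mono)
    finally have A0: "\<bar>Re (z^3 * E x)\<bar> \<le> x^2 * M0" .
    have A1: "\<bar>- b * x^2 + Re (z^3 * E x)\<bar> \<le> \<bar>- b * x^2\<bar> + \<bar>Re (z^3 * E x)\<bar>" by (rule abs_triangle_ineq)
    have A2: "\<bar>- b * x^2\<bar> = \<bar>b\<bar> * x^2" by (simp add: abs_mult)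
    have A: "\<bar>Re (1/g) - 1\<bar> \<le> M * x^2" unfolding r M_def using A0 A1 A2 by (simp add: algebra_simps)
    have "\<bar>Im (z^3 * E x)\<bar> \<le> \<bar>x\<bar>^3 * M0" using abs_Im_le_cmod nz3 order_trans by blast
    also have "\<dots> \<le> M * \<bar>x\<bar>^3" unfolding M_def by (simp add: algebra_simps)
    finally have B: "\<bar>Im (1/g) + a * x\<bar> \<le> M * \<bar>x\<bar>^3" unfolding i .
    show ?thesis using A B by (simp add: g_def z_def)
  qed
  from e1 e2 e3 have "eventually (\<lambda>x::real. \<bar>Re (1 / poly G (\<i> * of_real x)) - 1\<bar> \<le> M * x^2 \<and>
           \<bar>Im (1 / poly G (\<i> * of_real x)) + a * x\<bar> \<le> M * \<bar>x\<bar>^3) (at 0)"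
    by eventually_elim (rule key)
  thus ?thesis unfolding a_def by blast
qed



lemma Im_coeff_mult:
  fixes p q :: "complex poly"
  assumes "\<And>i. Im (coeff p i) = 0" "\<And>i. Im (coeff q i) = 0"
  shows "Im (coeff (p * q) k) = 0"
  unfolding coeff_mult Im_sum by (rule sum.neutral) (simp add: assms)

lemma Im_pa: "Im (pa n m i) = 0" unfolding pa_def by (rule Im_complex_of_real)
lemma Im_qb: "Im (qb n m i) = 0" unfolding qb_def by (rule Im_complex_of_real)

lemma padeH_poly: "padeH n m = (\<lambda>s. poly (pQ n m) s / poly (pP n m) s)"
  by (rule ext) (simp add: padeH_def poly_pP poly_pQ)

lemma gd_eq:
  "eventually (\<lambda>x. group_delay (padeH n m) x =
     1 - Re (poly (pW n m) (\<i> * of_real x) / (poly (pP n m) (\<i> * of_real x) * poly (pQ n m) (\<i> * of_real x)))) (at 0)"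
proof -
  have p0: "poly (pP n m) 0 = 1" by (simp add: poly_0_coeff_0 coeff_pP pa_def)
  have q0: "poly (pQ n m) 0 = 1" by (simp add: poly_0_coeff_0 coeff_pQ qb_def)
  show ?thesis
    using near0[OF p0 q0]
  proof eventually_elim
    case (elim x)
    hence d: "((\<lambda>t. Arg (poly (pQ n m) (\<i> * of_real t) / poly (pP n m) (\<i> * of_real t))) has_real_derivative
          (Re (poly (pW n m) (\<i> * of_real x) / (poly (pP n m) (\<i> * of_real x) * poly (pQ n m) (\<i> * of_real x))) - 1)) (at x)"
      unfolding pW_def by (intro deriv_arg) auto
    show ?case unfolding group_delay_def padeH_poly using DERIV_imp_deriv[OF d] by simp
  qed
qed

theorem theorem4:
  fixes n m :: nat
  assumes "m + 1 = n \<or> m + 2 = n"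
  shows "\<exists>c::real. c \<noteq> 0 \<and>
    (\<lambda>w. group_delay (padeH n m) w - 1 - c * w ^ (2 * (m + 1)))
      \<in> O[at 0](\<lambda>w. w ^ (2 * m + 4))"
proof -
  define N where "N = n + m"
  define G where "G = pP n m * pQ n m"
  define k :: real where "k = fact m / fact N * ((-1)^m * fact n / fact N)"
  have kne: "k \<noteq> 0" by (simp add: k_def)
  have K: "coeff (pW n m) N = complex_of_real k"
    unfolding N_def coeff_W_top by (simp add: pa_def qb_def k_def N_def)
  have polyW: "poly (pW n m) z = complex_of_real k * z ^ N" for z
    by (subst W_monom) (simp add: poly_monom K N_def[symmetric])
  have polyG: "poly G z = poly (pP n m) z * poly (pQ n m) z" for z by (simp add: G_def)
  have G0: "coeff G 0 = 1" by (simp add: G_def coeff_mult coeff_pP coeff_pQ pa_def qb_def)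
  have GIm: "Im (coeff G i) = 0" for i unfolding G_def
    by (rule Im_coeff_mult) (simp_all only: coeff_pP coeff_pQ Im_pa Im_qb)
  define a where "a = Re (coeff G 1)"
  obtain M where ev: "eventually (\<lambda>x::real. \<bar>Re (1 / poly G (\<i> * of_real x)) - 1\<bar> \<le> M * x^2 \<and>
           \<bar>Im (1 / poly G (\<i> * of_real x)) + a * x\<bar> \<le> M * \<bar>x\<bar>^3) (at 0)"
    using expand[OF G0 GIm GIm] unfolding a_def by blast
  have evf: "eventually (\<lambda>x. group_delay (padeH n m) x - 1 = - Re (complex_of_real k * (\<i> * of_real x) ^ N * (1 / poly G (\<i> * of_real x)))) (at 0)"
    using gd_eq[of n m] by eventually_elim (simp add: polyW polyG)
  from assms show ?thesis
  proof
    assume nm: "m + 1 = n"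
    have N: "N = 2 * m + 1" using nm by (simp add: N_def)
    define s :: real where "s = (-1)^m"
    have pw: "(\<i> * complex_of_real x) ^ N = \<i> * complex_of_real (s * x ^ N)" for x
    proof -
      have i: "\<i> ^ N = \<i> * (-1)^m" unfolding N by (simp add: power_mult)
      have "(\<i> * complex_of_real x) ^ N = \<i> ^ N * complex_of_real x ^ N" by (rule power_mult_distrib)
      thus ?thesis unfolding i by (simp add: s_def)
    qed
    have a_val: "a = fact (N - 1) / fact N"
    proof -
      have "coeff G 1 = pa n m 0 * qb n m 1 + pa n m 1 * qb n m 0"
        by (simp add: G_def coeff_mult coeff_pP coeff_pQ)
      moreover have "pa n m 0 = 1" "qb n m 0 = 1" by (simp_all add: pa_def qb_def)
      ultimately have c1: "coeff G 1 = pa n m 1 + qb n m 1" by simp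
      have "pa n m 1 + qb n m 1 = complex_of_real (real (n choose 1) * fact (n+m-1) / fact (n+m) + (-1)^1 * real (m choose 1) * fact (n+m-1) / fact (n+m))"
        unfolding pa_def qb_def by (simp only: of_real_add)
      hence "a = real (n choose 1) * fact (n+m-1) / fact (n+m) + (-1)^1 * real (m choose 1) * fact (n+m-1) / fact (n+m)"
        unfolding a_def c1 by (simp only: Re_complex_of_real)
      also have "\<dots> = real n * fact (n+m-1) / fact (n+m) + (-1) * real m * fact (n+m-1) / fact (n+m)"
        by simp
      also have "\<dots> = (real n - real m) * fact (n+m-1) / fact (n+m)" by (simp add: algebra_simps add_divide_distrib diff_divide_distrib)
      also have "\<dots> = fact (N - 1) / fact N" using nm by (simp add: N_def)
      finally show ?thesis .
    qed
    have ane: "a \<noteq> 0" by (simp add: a_val)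
    define c where "c = - k * s * a"
    have cne: "c \<noteq> 0" using kne ane by (simp add: c_def s_def)
    have "(\<lambda>w. group_delay (padeH n m) w - 1 - c * w ^ (2 * (m + 1))) \<in> O[at 0](\<lambda>w. w ^ (2 * m + 4))"
    proof (rule bigoI[where c = "\<bar>k\<bar> * M"])
      show "eventually (\<lambda>x. norm (group_delay (padeH n m) x - 1 - c * x ^ (2 * (m + 1))) \<le> \<bar>k\<bar> * M * norm (x ^ (2 * m + 4))) (at 0)"
        using ev evf
      proof eventually_elim
        case (elim x)
        define u where "u = 1 / poly G (\<i> * of_real x)"
        have "group_delay (padeH n m) x - 1 - c * x ^ (2 * (m + 1)) = k * s * x ^ N * (Im u + a * x)"
          using elim(2) unfolding pw u_def[symmetric] by (simp add: c_def N algebra_simps)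
        hence "norm (group_delay (padeH n m) x - 1 - c * x ^ (2 * (m + 1))) = \<bar>k\<bar> * \<bar>x\<bar> ^ N * \<bar>Im u + a * x\<bar>"
          by (simp add: abs_mult s_def power_abs)
        also have "\<dots> \<le> \<bar>k\<bar> * \<bar>x\<bar> ^ N * (M * \<bar>x\<bar>^3)"
          using elim(1) unfolding u_def[symmetric] by (intro mult_left_mono) auto
        also have "\<dots> = \<bar>k\<bar> * M * (\<bar>x\<bar> ^ N * \<bar>x\<bar>^3)" by (simp only: ac_simps)
        also have "\<bar>x\<bar> ^ N * \<bar>x\<bar>^3 = norm (x ^ (2 * m + 4))"
          unfolding power_add[symmetric] N by (simp add: power_abs add.commute)
        finally show ?case by simp
      qed
    qed
    with cne show ?thesis by blast
  next
    assume nm: "m + 2 = n"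
    have N: "N = 2 * (m + 1)" using nm by (simp add: N_def)
    define s :: real where "s = (-1)^(m+1)"
    have pw: "(\<i> * complex_of_real x) ^ N = complex_of_real (s * x ^ N)" for x
    proof -
      have i: "\<i> ^ N = (-1)^(m+1)" unfolding N power_mult by simp
      have "(\<i> * complex_of_real x) ^ N = \<i> ^ N * complex_of_real x ^ N" by (rule power_mult_distrib)
      thus ?thesis unfolding i by (simp add: s_def)
    qed
    define c where "c = - k * s"
    have cne: "c \<noteq> 0" using kne by (simp add: c_def s_def)
    have "(\<lambda>w. group_delay (padeH n m) w - 1 - c * w ^ (2 * (m + 1))) \<in> O[at 0](\<lambda>w. w ^ (2 * m + 4))"
    proof (rule bigoI[where c = "\<bar>c\<bar> * M"])
      show "eventually (\<lambda>x. norm (group_delay (padeH n m) x - 1 - c * x ^ (2 * (m + 1))) \<le> \<bar>c\<bar> * M * norm (x ^ (2 * m + 4))) (at 0)"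
        using ev evf
      proof eventually_elim
        case (elim x)
        define u where "u = 1 / poly G (\<i> * of_real x)"
        have "group_delay (padeH n m) x - 1 - c * x ^ (2 * (m + 1)) = c * x ^ N * (Re u - 1)"
          using elim(2) unfolding pw u_def[symmetric] by (simp add: c_def N algebra_simps)
        hence "norm (group_delay (padeH n m) x - 1 - c * x ^ (2 * (m + 1))) = \<bar>c\<bar> * \<bar>x\<bar> ^ N * \<bar>Re u - 1\<bar>"
          by (simp add: abs_mult power_abs)
        also have "\<dots> \<le> \<bar>c\<bar> * \<bar>x\<bar> ^ N * (M * x^2)"
          using elim(1) unfolding u_def[symmetric] by (intro mult_left_mono) auto
        also have "\<dots> = \<bar>c\<bar> * M * (\<bar>x\<bar> ^ N * x^2)" by (simp only: ac_simps)
        also have "\<bar>x\<bar> ^ N * x^2 = norm (x ^ (2 * m + 4))"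
        proof -
          have x2: "(x^2::real) = \<bar>x\<bar>^2" by simp
          have e: "2*(m+1)+2 = 2*m+4" by simp
          have "\<bar>x\<bar>^(2*(m+1)) * \<bar>x\<bar>^2 = \<bar>x\<bar>^(2*m+4)" by (simp only: power_add[symmetric] e)
          then show ?thesis unfolding x2 N by (simp only: real_norm_def power_abs)
        qed
        finally show ?case by simp
      qed
    qed
    with cne show ?thesis by blast
  qed
qed


end
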